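(* Let $\Gamma_C=(\mathcal{S},\mathcal{P},\mathcal{E})$ be a correspondence graph with body graph $\Gamma_B$, and let $\mathbf{x},\mathbf{y}:\mathcal{S}\to\mathbb{R}^d$. The node-patch frameworks $(\Gamma_C,\mathbf{x})$ and $(\Gamma_C,\mathbf{y})$ are equivalent if and only if the frameworks $(\Gamma_B,\mathbf{x})$ and $(\Gamma_B,\mathbf{y})$ are equivalent.
   Context: $\mathcal{S}=\{1,\dots,N\}$, $\mathcal{P}=\{P_1,\dots,P_M\}$ with $P_i\subseteq\mathcal{S}$, and $(k,i)\in\mathcal{E}$ iff $k\in P_i$. The body graph $\Gamma_B$ has vertex set $\mathcal{S}$ and an edge between $k\ne l$ iff $k,l\in P_i$ for some $i$. A rigid transform is $x\mapsto Qx+t$ with $Q$ orthogonal. Node-patch frameworks $(\Gamma_C,\mathbf{x})$, $(\Gamma_C,\mathbf{y})$ are equivalent if there exist rigid transforms $\mathcal{Q}_1,\dots,\mathcal{Q}_M$ with $\mathbf{x}(k)=\mathcal{Q}_i\mathbf{y}(k)$ for all $(k,i)\in\mathcal{E}$. Frameworks $(G,\mathbf{p})$, $(G,\mathbf{q})$ of a graph $G$ are equivalent if $\|\mathbf{p}(u)-\mathbf{p}(v)\|=\|\mathbf{q}(u)-\mathbf{q}(v)\|$ for every edge $(u,v)$ of $G$ (Euclidean norm). *)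

theory Defs
  imports "HOL-Analysis.Analysis"
begin

text \<open>Nodes S = {1..N}, patches P 1, ..., P M (P :: nat => nat set), points in R^d = real^'d.\<close>

definition rigid_transform :: "(real^'d \<Rightarrow> real^'d) \<Rightarrow> bool" where
  "rigid_transform f \<longleftrightarrow> (\<exists>Q t. orthogonal_matrix Q \<and> f = (\<lambda>v. Q *v v + t))"

definition corr_edges :: "nat \<Rightarrow> (nat \<Rightarrow> nat set) \<Rightarrow> (nat \<times> nat) set" where
  "corr_edges M P = {(k, i). i \<in> {1..M} \<and> k \<in> P i}"

definition np_equivalent ::
  "nat \<Rightarrow> (nat \<Rightarrow> nat set) \<Rightarrow> (nat \<Rightarrow> real^'d) \<Rightarrow> (nat \<Rightarrow> real^'d) \<Rightarrow> bool" where
  "np_equivalent M P x y \<longleftrightarrow>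
     (\<exists>T. (\<forall>i\<in>{1..M}. rigid_transform (T i)) \<and>
          (\<forall>(k, i)\<in>corr_edges M P. x k = T i (y k)))"

definition body_edge :: "nat \<Rightarrow> nat \<Rightarrow> (nat \<Rightarrow> nat set) \<Rightarrow> nat \<Rightarrow> nat \<Rightarrow> bool" where
  "body_edge N M P k l \<longleftrightarrow> k \<in> {1..N} \<and> l \<in> {1..N} \<and> k \<noteq> l \<and>
     (\<exists>i\<in>{1..M}. k \<in> P i \<and> l \<in> P i)"

definition framework_equivalent ::
  "(nat \<Rightarrow> nat \<Rightarrow> bool) \<Rightarrow> (nat \<Rightarrow> real^'d) \<Rightarrow> (nat \<Rightarrow> real^'d) \<Rightarrow> bool" where
  "framework_equivalent G p q \<longleftrightarrow> (\<forall>u v. G u v \<longrightarrow> norm (p u - p v) = norm (q u - q v))"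

end

theory Submission
  imports Defs
begin

lemma reflection_orth:
  fixes u :: "real^'d"
  assumes "u \<noteq> 0"
  shows "orthogonal_transformation (\<lambda>v. v - (2 * (v \<bullet> u) / (u \<bullet> u)) *\<^sub>R u)"
proof -
  define c where "c = 2 / (u \<bullet> u)"
  have uu: "u \<bullet> u \<noteq> 0" using assms by simp
  have cu: "c * (u \<bullet> u) = 2" unfolding c_def using uu by simp
  have eq: "(\<lambda>v. v - (2 * (v \<bullet> u) / (u \<bullet> u)) *\<^sub>R u) = (\<lambda>v. v - (c * (v \<bullet> u)) *\<^sub>R u)"
    unfolding c_def by simp
  have e: "(v - a *\<^sub>R u) \<bullet> (w - b *\<^sub>R u) = v \<bullet> w - b * (v \<bullet> u) - a * (u \<bullet> w) + a * b * (u \<bullet> u)"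
    for v w :: "real^'d" and a b :: real
    by (simp add: inner_diff_left inner_diff_right algebra_simps)
  have "(v - (c * (v \<bullet> u)) *\<^sub>R u) \<bullet> (w - (c * (w \<bullet> u)) *\<^sub>R u) = v \<bullet> w" for v w :: "real^'d"
  proof -
    have "(c * (v \<bullet> u)) * (c * (w \<bullet> u)) * (u \<bullet> u) = c * (v \<bullet> u) * (w \<bullet> u) * (c * (u \<bullet> u))"
      by (simp add: algebra_simps)
    also have "\<dots> = 2 * c * (v \<bullet> u) * (w \<bullet> u)" using cu by simp
    finally have "(c * (v \<bullet> u)) * (c * (w \<bullet> u)) * (u \<bullet> u) = 2 * c * (v \<bullet> u) * (w \<bullet> u)" .
    then show ?thesis unfolding e by (simp add: inner_commute[of u w] algebra_simps)
  qed
  moreover have "linear (\<lambda>v. v - (c * (v \<bullet> u)) *\<^sub>R u)"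
  proof (rule linearI)
    fix x y :: "real^'d" and r :: real
    show "x + y - (c * ((x + y) \<bullet> u)) *\<^sub>R u = x - (c * (x \<bullet> u)) *\<^sub>R u + (y - (c * (y \<bullet> u)) *\<^sub>R u)"
      by (simp add: inner_add_left distrib_left scaleR_add_left)
    show "r *\<^sub>R x - (c * ((r *\<^sub>R x) \<bullet> u)) *\<^sub>R u = r *\<^sub>R (x - (c * (x \<bullet> u)) *\<^sub>R u)"
      by (simp add: scaleR_diff_right)
  qed
  ultimately show ?thesis unfolding eq orthogonal_transformation_def by blast
qed

lemma gram_extend:
  fixes a b :: "nat \<Rightarrow> real^'d"
  assumes "finite K" "\<forall>k\<in>K. \<forall>l\<in>K. a k \<bullet> a l = b k \<bullet> b l"
  shows "\<exists>g. orthogonal_transformation g \<and> (\<forall>k\<in>K. g (a k) = b k)"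
  using assms
proof (induction K rule: finite_induct)
  case empty
  then show ?case using orthogonal_transformation_id by blast
next
  case (insert j K)
  then obtain g where g: "orthogonal_transformation g" "\<forall>k\<in>K. g (a k) = b k" by auto
  define p where "p = g (a j)"
  define q where "q = b j"
  define u where "u = p - q"
  have gi: "g v \<bullet> g w = v \<bullet> w" for v w using g(1) unfolding orthogonal_transformation_def by blast
  have pk: "p \<bullet> b k = q \<bullet> b k" if "k \<in> K" for k
    using insert.prems that g(2) gi unfolding p_def q_def by (metis insertCI)
  have pp: "p \<bullet> p = q \<bullet> q" using insert.prems gi unfolding p_def q_def by auto
  show ?case
  proof (cases "u = 0")
    case True
    then show ?thesis using g unfolding u_def p_def q_def by auto
  next
    case False
    define h where "h = (\<lambda>v::real^'d. v - (2 * (v \<bullet> u) / (u \<bullet> u)) *\<^sub>R u)"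
    have ho: "orthogonal_transformation h" unfolding h_def by (rule reflection_orth[OF False])
    have hb: "h (b k) = b k" if "k \<in> K" for k
    proof -
      have "b k \<bullet> u = 0" unfolding u_def using pk[OF that] by (simp add: inner_diff_right inner_commute)
      then show ?thesis unfolding h_def by simp
    qed
    have uu: "u \<bullet> u \<noteq> 0" using False by simp
    have "2 * (p \<bullet> u) = u \<bullet> u" unfolding u_def using pp
      by (simp add: inner_diff_left inner_diff_right inner_commute)
    then have hp: "h p = q" unfolding h_def using uu by (simp add: u_def)
    have "orthogonal_transformation (h \<circ> g)" using ho g(1) by (rule orthogonal_transformation_compose)
    moreover have "\<forall>k\<in>insert j K. (h \<circ> g) (a k) = b k"
      using hp hb g(2) unfolding p_def q_def by auto
    ultimately show ?thesis by blast
  qed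
qed

lemma dist_extend:
  fixes x y :: "nat \<Rightarrow> real^'d"
  assumes "finite K" "\<forall>k\<in>K. \<forall>l\<in>K. norm (x k - x l) = norm (y k - y l)"
  shows "\<exists>f. rigid_transform f \<and> (\<forall>k\<in>K. x k = f (y k))"
proof (cases "K = {}")
  case True
  then show ?thesis unfolding rigid_transform_def
    by (intro exI[of _ "\<lambda>v. mat 1 *v v + 0"] conjI exI[of _ "mat 1"] exI[of _ 0] orthogonal_matrix_id) auto
next
  case False
  then obtain k0 where k0: "k0 \<in> K" by auto
  define a where "a = (\<lambda>k. y k - y k0)"
  define b where "b = (\<lambda>k. x k - x k0)"
  have ip: "v \<bullet> w = ((norm v)^2 + (norm w)^2 - (norm (v - w))^2) / 2" for v w :: "real^'d"
    by (simp add: power2_norm_eq_inner inner_diff_left inner_diff_right inner_commute)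
  have "\<forall>k\<in>K. \<forall>l\<in>K. a k \<bullet> a l = b k \<bullet> b l"
  proof (intro ballI)
    fix k l assume "k \<in> K" "l \<in> K"
    then have "norm (a k) = norm (b k)" "norm (a l) = norm (b l)" "norm (a k - a l) = norm (b k - b l)"
      using assms(2) k0 unfolding a_def b_def by auto
    then show "a k \<bullet> a l = b k \<bullet> b l" by (simp add: ip[of "a k"] ip[of "b k"])
  qed
  then obtain g where g: "orthogonal_transformation g" "\<forall>k\<in>K. g (a k) = b k"
    using gram_extend[OF assms(1)] by blast
  define Q where "Q = matrix g"
  have Q: "orthogonal_matrix Q" "\<And>v. Q *v v = g v"
    using g(1) unfolding Q_def orthogonal_transformation_matrix
    by (auto simp: matrix_works)
  have lin: "linear g" using g(1) orthogonal_transformation_linear by blast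
  show ?thesis unfolding rigid_transform_def
  proof (intro exI conjI ballI)
    show "orthogonal_matrix Q" by (rule Q(1))
    fix k assume "k \<in> K"
    then have "g (y k - y k0) = x k - x k0" using g(2) unfolding a_def b_def by auto
    then have "g (y k) - g (y k0) = x k - x k0" using lin by (simp add: linear_diff)
    then show "x k = Q *v y k + (x k0 - Q *v y k0)" by (simp add: Q(2) algebra_simps)
  qed simp
qed

theorem proposition6:
  fixes N M :: nat and P :: "nat \<Rightarrow> nat set" and x y :: "nat \<Rightarrow> real^'d"
  assumes "\<forall>i\<in>{1..M}. P i \<subseteq> {1..N}"
  shows "np_equivalent M P x y \<longleftrightarrow> framework_equivalent (body_edge N M P) x y"
proof
  assume "np_equivalent M P x y"
  then obtain T where T: "\<forall>i\<in>{1..M}. rigid_transform (T i)"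
    "\<forall>(k, i)\<in>corr_edges M P. x k = T i (y k)" unfolding np_equivalent_def by blast
  show "framework_equivalent (body_edge N M P) x y"
    unfolding framework_equivalent_def
  proof (intro allI impI)
    fix u v assume "body_edge N M P u v"
    then obtain i where i: "i \<in> {1..M}" "u \<in> P i" "v \<in> P i" unfolding body_edge_def by blast
    obtain Q t where Qt: "orthogonal_matrix Q" "T i = (\<lambda>v. Q *v v + t)"
      using T(1) i(1) unfolding rigid_transform_def by blast
    have "x u = Q *v y u + t" "x v = Q *v y v + t"
      using T(2) i Qt(2) unfolding corr_edges_def by auto
    then have "x u - x v = Q *v (y u - y v)" by (simp add: matrix_vector_mult_diff_distrib)
    moreover have "orthogonal_transformation (\<lambda>w. Q *v w)"
      using Qt(1) by (simp add: orthogonal_transformation_matrix)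
    ultimately show "norm (x u - x v) = norm (y u - y v)"
      using orthogonal_transformation_norm by metis
  qed
next
  assume F: "framework_equivalent (body_edge N M P) x y"
  have "\<forall>i\<in>{1..M}. \<exists>f. rigid_transform f \<and> (\<forall>k\<in>P i. x k = f (y k))"
  proof
    fix i assume i: "i \<in> {1..M}"
    have fin: "finite (P i)" using assms i finite_subset by blast
    have "\<forall>k\<in>P i. \<forall>l\<in>P i. norm (x k - x l) = norm (y k - y l)"
    proof (intro ballI)
      fix k l assume kl: "k \<in> P i" "l \<in> P i"
      show "norm (x k - x l) = norm (y k - y l)"
      proof (cases "k = l")
        case False
        then have "body_edge N M P k l" using kl i assms unfolding body_edge_def by blast
        then show ?thesis using F unfolding framework_equivalent_def by blast
      qed simp
    qed
    then show "\<exists>f. rigid_transform f \<and> (\<forall>k\<in>P i. x k = f (y k))"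
      using dist_extend[OF fin] by blast
  qed
  then obtain T where "\<forall>i\<in>{1..M}. rigid_transform (T i) \<and> (\<forall>k\<in>P i. x k = T i (y k))"
    by metis
  then show "np_equivalent M P x y" unfolding np_equivalent_def corr_edges_def by auto
qed

end
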